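(* Let $\mathcal{D}=(\mathcal{V},\mathcal{E})$ be a simple digraph with $\mathcal{V}=\{1,\ldots,n\}$, $n\ge 2$, and let $L$ be its Laplacian matrix with rows $L_1,\dots,L_n$. Then $$r_{\max}(\mathcal{D})=\min_{b^1,b^2}\ \max\Big(\max_{i} L_i b^1,\ \max_j L_j b^2\Big)$$ subject to $b^1+b^2\le \mathbf 1$ (componentwise), $1\le \mathbf 1^T b^1\le n-1$, $1\le \mathbf 1^T b^2\le n-1$, and $b^1,b^2\in\{0,1\}^n$, where $i,j$ range over $\{1,\ldots,n\}$.
   Context: A simple digraph has no self-loops and at most one directed edge $(i,j)$ from $i$ to $j$. For $j\in\mathcal{V}$, $\mathcal{N}_j=\{i\in\mathcal{V}:(i,j)\in\mathcal{E}\}$ is the set of in-neighbors of $j$. The Laplacian $L\in\mathbb{R}^{n\times n}$ has entries $L_{j,j}=|\mathcal{N}_j|$, $L_{j,i}=-1$ if $i\neq j$ and $i\in\mathcal{N}_j$, and $L_{j,i}=0$ if $i\ne j$ and $i\notin\mathcal{N}_j$. For $r\in\mathbb{Z}_{\ge 0}$, a nonempty subset $S\subseteq\mathcal{V}$ is $r$-reachable if there exists $i\in S$ with $|\mathcal{N}_i\setminus S|\ge r$. A digraph on $n\ge 2$ nodes is $r$-robust if for every pair of nonempty, disjoint subsets of $\mathcal{V}$, at least one of them is $r$-reachable. $r_{\max}(\mathcal{D})$ denotes the largest integer $r\ge 0$ for which $\mathcal{D}$ is $r$-robust. $\mathbf 1$ is the all-ones vector of length $n$. *)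

theory Defs
  imports Main
begin

text \<open>Digraphs on the vertex set V = {1..n}, given by an edge set E of pairs (i,j),
  meaning an edge from i to j.  Using a set of pairs makes "at most one edge from i to j"
  automatic.\<close>

definition simple_digraph :: "nat \<Rightarrow> (nat \<times> nat) set \<Rightarrow> bool" where
  "simple_digraph n E \<longleftrightarrow> E \<subseteq> {1..n} \<times> {1..n} \<and> (\<forall>i. (i, i) \<notin> E)"

definition in_nbrs :: "(nat \<times> nat) set \<Rightarrow> nat \<Rightarrow> nat set" where
  "in_nbrs E j = {i. (i, j) \<in> E}"

definition laplacian :: "(nat \<times> nat) set \<Rightarrow> nat \<Rightarrow> nat \<Rightarrow> int" where
  "laplacian E j i =
     (if i = j then int (card (in_nbrs E j)) else if i \<in> in_nbrs E j then -1 else 0)"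

definition lap_row_mult :: "nat \<Rightarrow> (nat \<times> nat) set \<Rightarrow> nat \<Rightarrow> (nat \<Rightarrow> int) \<Rightarrow> int" where
  "lap_row_mult n E j b = (\<Sum>k\<in>{1..n}. laplacian E j k * b k)"

definition r_reachable :: "(nat \<times> nat) set \<Rightarrow> nat \<Rightarrow> nat set \<Rightarrow> bool" where
  "r_reachable E r S \<longleftrightarrow> S \<noteq> {} \<and> (\<exists>i\<in>S. card (in_nbrs E i - S) \<ge> r)"

definition r_robust :: "nat \<Rightarrow> (nat \<times> nat) set \<Rightarrow> nat \<Rightarrow> bool" where
  "r_robust n E r \<longleftrightarrow>
     (\<forall>S1 S2. S1 \<subseteq> {1..n} \<longrightarrow> S2 \<subseteq> {1..n} \<longrightarrow> S1 \<noteq> {} \<longrightarrow> S2 \<noteq> {} \<longrightarrow>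
        S1 \<inter> S2 = {} \<longrightarrow> r_reachable E r S1 \<or> r_reachable E r S2)"

definition r_max :: "nat \<Rightarrow> (nat \<times> nat) set \<Rightarrow> nat" where
  "r_max n E = (GREATEST r. r_robust n E r)"

end

theory Submission
  imports Defs
begin

definition ind :: "nat set \<Rightarrow> nat \<Rightarrow> int" where
  "ind S = (\<lambda>k. if k \<in> S then 1 else 0)"

definition mS :: "(nat \<times> nat) set \<Rightarrow> nat set \<Rightarrow> nat" where
  "mS E S = Max ((\<lambda>i. card (in_nbrs E i - S)) ` S)"

lemma sum_ind01: "finite A \<Longrightarrow> (\<Sum>k\<in>A. if k \<in> B then 1 else 0 :: int) = int (card (A \<inter> B))"
  by (simp add: sum.If_cases Int_def)

lemma nbrs_sub:
  assumes "simple_digraph n E"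
  shows "in_nbrs E i \<subseteq> {1..n}" "i \<notin> in_nbrs E i"
  using assms unfolding simple_digraph_def in_nbrs_def by auto

lemma row:
  assumes sd: "simple_digraph n E" and S: "S \<subseteq> {1..n}" and i: "i \<in> {1..n}"
  shows "lap_row_mult n E i (ind S) =
    (if i \<in> S then int (card (in_nbrs E i - S)) else - int (card (in_nbrs E i \<inter> S)))"
proof -
  let ?N = "in_nbrs E i"
  have N: "?N \<subseteq> {1..n}" "i \<notin> ?N" using nbrs_sub[OF sd] by auto
  have fN: "finite ?N" using N finite_subset by blast
  have eq: "\<And>k. laplacian E i k * ind S k =
     (if k = i then (if i \<in> S then int (card ?N) else 0) else 0) - (if k \<in> ?N \<inter> S then 1 else 0)"
    using N by (auto simp: laplacian_def ind_def)
  have "lap_row_mult n E i (ind S) =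
      (\<Sum>k\<in>{1..n}. (if k = i then (if i \<in> S then int (card ?N) else 0) else 0))
      - (\<Sum>k\<in>{1..n}. (if k \<in> ?N \<inter> S then 1 else 0))"
    unfolding lap_row_mult_def eq by (simp add: sum_subtractf)
  also have "(\<Sum>k\<in>{1..n}. (if k = i then (if i \<in> S then int (card ?N) else 0) else 0))
      = (if i \<in> S then int (card ?N) else 0)" using i by simp
  also have "(\<Sum>k\<in>{1..n}. (if k \<in> ?N \<inter> S then 1 else 0 :: int)) = int (card (?N \<inter> S))"
  proof -
    have "(\<Sum>k\<in>{1..n}. (if k \<in> ?N \<inter> S then 1 else 0 :: int)) = int (card ({1..n} \<inter> (?N \<inter> S)))"
      by (rule sum_ind01) simp
    also have "{1..n} \<inter> (?N \<inter> S) = ?N \<inter> S" using N by auto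
    finally show ?thesis by simp
  qed
  moreover have "int (card ?N) - int (card (?N \<inter> S)) = int (card (?N - S))"
  proof -
    have e: "card (?N - S) = card ?N - card (?N \<inter> S)" using fN by (simp add: card_Diff_subset_Int)
    have "card (?N \<inter> S) \<le> card ?N" using fN by (intro card_mono) auto
    then show ?thesis unfolding e by (simp add: of_nat_diff)
  qed
  ultimately show ?thesis by auto
qed

lemma maxrow:
  assumes sd: "simple_digraph n E" and S: "S \<subseteq> {1..n}" "S \<noteq> {}"
  shows "Max ((\<lambda>i. lap_row_mult n E i (ind S)) ` {1..n}) = int (mS E S)"
proof -
  have fS: "finite S" using S finite_subset by blast
  have mem: "mS E S \<in> (\<lambda>i. card (in_nbrs E i - S)) ` S"
    unfolding mS_def using fS S by (intro Max_in) auto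
  then obtain i0 where i0: "i0 \<in> S" "mS E S = card (in_nbrs E i0 - S)" by auto
  show ?thesis
  proof (rule Max_eqI)
    show "finite ((\<lambda>i. lap_row_mult n E i (ind S)) ` {1..n})" by simp
  next
    fix y assume "y \<in> (\<lambda>i. lap_row_mult n E i (ind S)) ` {1..n}"
    then obtain i where i: "i \<in> {1..n}" "y = lap_row_mult n E i (ind S)" by auto
    show "y \<le> int (mS E S)"
    proof (cases "i \<in> S")
      case True
      then have "card (in_nbrs E i - S) \<le> mS E S" unfolding mS_def using fS by (intro Max_ge) auto
      then show ?thesis using i True row[OF sd S(1) i(1)] by simp
    next
      case False
      then show ?thesis using i row[OF sd S(1) i(1)] by simp
    qed
  next
    show "int (mS E S) \<in> (\<lambda>i. lap_row_mult n E i (ind S)) ` {1..n}"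
      using i0 S row[OF sd S(1), of i0] by (intro image_eqI[of _ _ i0]) auto
  qed
qed

lemma robust_bound:
  assumes "n \<ge> 2" "r_robust n E r" "simple_digraph n E"
  shows "r \<le> n"
proof -
  have "r_reachable E r {1} \<or> r_reachable E r {2}"
    using assms(1,2) unfolding r_robust_def by auto
  then obtain S i where "i \<in> S" "card (in_nbrs E i - S) \<ge> r"
    unfolding r_reachable_def by blast
  moreover have "card (in_nbrs E i - S) \<le> card {1..n}"
    using nbrs_sub[OF assms(3)] by (intro card_mono) auto
  ultimately show ?thesis by simp
qed

lemma robust_rmax:
  assumes "n \<ge> 2" "simple_digraph n E"
  shows "r_robust n E (r_max n E)" "\<And>r. r_robust n E r \<Longrightarrow> r \<le> r_max n E"
proof -
  have r0: "r_robust n E 0" unfolding r_robust_def r_reachable_def by auto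
  show "r_robust n E (r_max n E)" unfolding r_max_def
    by (rule GreatestI_nat[where P="r_robust n E", OF r0]) (use robust_bound[OF assms(1) _ assms(2)] in blast)
  fix r assume "r_robust n E r"
  then show "r \<le> r_max n E" unfolding r_max_def
    by (rule Greatest_le_nat[where b=n]) (use robust_bound[OF assms(1) _ assms(2)] in blast)
qed

theorem theorem1:
  fixes n :: nat and E :: "(nat \<times> nat) set"
  assumes "n \<ge> 2" and "simple_digraph n E"
  shows "int (r_max n E) =
    Min ((\<lambda>(b1, b2). max (Max ((\<lambda>i. lap_row_mult n E i b1) ` {1..n}))
                           (Max ((\<lambda>j. lap_row_mult n E j b2) ` {1..n})))
         ` {(b1, b2). (\<forall>k. k \<notin> {1..n} \<longrightarrow> b1 k = 0 \<and> b2 k = 0)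
                    \<and> (\<forall>k\<in>{1..n}. b1 k \<in> {0, 1} \<and> b2 k \<in> {0, 1} \<and> b1 k + b2 k \<le> 1)
                    \<and> 1 \<le> (\<Sum>k\<in>{1..n}. b1 k) \<and> (\<Sum>k\<in>{1..n}. b1 k) \<le> int n - 1
                    \<and> 1 \<le> (\<Sum>k\<in>{1..n}. b2 k) \<and> (\<Sum>k\<in>{1..n}. b2 k) \<le> int n - 1})"
  (is "_ = Min (?f ` ?F)")
proof -
  note sd = assms(2)
  have sumind: "(\<Sum>k\<in>{1..n}. ind S k) = int (card S)" if "S \<subseteq> {1..n}" for S
  proof -
    have "(\<Sum>k\<in>{1..n}. ind S k) = int (card ({1..n} \<inter> S))"
      unfolding ind_def by (rule sum_ind01) simp
    also have "{1..n} \<inter> S = S" using that by auto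
    finally show ?thesis by simp
  qed
  have repr: "\<exists>S1 S2. S1 \<subseteq> {1..n} \<and> S2 \<subseteq> {1..n} \<and> S1 \<noteq> {} \<and> S2 \<noteq> {} \<and> S1 \<inter> S2 = {}
      \<and> p = (ind S1, ind S2)" if "p \<in> ?F" for p
  proof -
    obtain b1 b2 where p: "p = (b1, b2)" by (cases p)
    define S1 where "S1 = {k\<in>{1..n}. b1 k = 1}"
    define S2 where "S2 = {k\<in>{1..n}. b2 k = 1}"
    have F: "(\<forall>k. k \<notin> {1..n} \<longrightarrow> b1 k = 0 \<and> b2 k = 0)"
       "(\<forall>k\<in>{1..n}. b1 k \<in> {0, 1} \<and> b2 k \<in> {0, 1} \<and> b1 k + b2 k \<le> 1)"
       "1 \<le> (\<Sum>k\<in>{1..n}. b1 k)" "1 \<le> (\<Sum>k\<in>{1..n}. b2 k)"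
      using that p by auto
    have b1: "b1 = ind S1" unfolding ind_def S1_def
    proof
      fix k show "b1 k = (if k \<in> {k \<in> {1..n}. b1 k = 1} then 1 else 0)"
        using F(1,2) by (cases "k \<in> {1..n}") auto
    qed
    have b2: "b2 = ind S2" unfolding ind_def S2_def
    proof
      fix k show "b2 k = (if k \<in> {k \<in> {1..n}. b2 k = 1} then 1 else 0)"
        using F(1,2) by (cases "k \<in> {1..n}") auto
    qed
    have s1: "S1 \<subseteq> {1..n}" "S2 \<subseteq> {1..n}" unfolding S1_def S2_def by auto
    have "S1 \<noteq> {}" using F(3) b1 sumind[OF s1(1)] by auto
    moreover have "S2 \<noteq> {}" using F(4) b2 sumind[OF s1(2)] by auto
    moreover have "S1 \<inter> S2 = {}"
    proof -
      { fix k assume k: "k \<in> S1" "k \<in> S2"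
        then have "b1 k = 1" "b2 k = 1" "k \<in> {1..n}" unfolding S1_def S2_def by auto
        then have False using F(2) by fastforce }
      then show ?thesis by blast
    qed
    ultimately show ?thesis using s1 b1 b2 p by blast
  qed
  have val: "?f (ind S1, ind S2) = int (max (mS E S1) (mS E S2))"
    if "S1 \<subseteq> {1..n}" "S2 \<subseteq> {1..n}" "S1 \<noteq> {}" "S2 \<noteq> {}" for S1 S2
    using maxrow[OF sd that(1,3)] maxrow[OF sd that(2,4)] by simp
  have finF: "finite ?F"
  proof (rule finite_subset)
    show "?F \<subseteq> (\<lambda>(S1, S2). (ind S1, ind S2)) ` (Pow {1..n} \<times> Pow {1..n})"
    proof
      fix p assume pF: "p \<in> ?F"
      obtain S1 S2 where SS: "S1 \<subseteq> {1..n}" "S2 \<subseteq> {1..n}" "p = (ind S1, ind S2)"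
        using repr[OF pF] by blast
      have "(S1, S2) \<in> Pow {1..n} \<times> Pow {1..n}" using SS(1,2) by simp
      moreover have "p = (\<lambda>(S1, S2). (ind S1, ind S2)) (S1, S2)" using SS(3) by simp
      ultimately show "p \<in> (\<lambda>(S1, S2). (ind S1, ind S2)) ` (Pow {1..n} \<times> Pow {1..n})"
        by (rule rev_image_eqI)
    qed
  qed simp
  have lower: "int (r_max n E) \<le> y" if "y \<in> ?f ` ?F" for y
  proof -
    from that obtain p where yp: "y = ?f p" and pF: "p \<in> ?F" by (rule imageE)
    obtain S1 S2 where S: "S1 \<subseteq> {1..n}" "S2 \<subseteq> {1..n}" "S1 \<noteq> {}" "S2 \<noteq> {}"
      "S1 \<inter> S2 = {}" and pe: "p = (ind S1, ind S2)" using repr[OF pF] by blast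
    have y: "y = ?f (ind S1, ind S2)" using yp pe by simp
    have "r_reachable E (r_max n E) S1 \<or> r_reachable E (r_max n E) S2"
      using robust_rmax(1)[OF assms] S unfolding r_robust_def by blast
    then have "r_max n E \<le> mS E S1 \<or> r_max n E \<le> mS E S2"
    proof
      assume "r_reachable E (r_max n E) S1"
      then obtain i where "i \<in> S1" "card (in_nbrs E i - S1) \<ge> r_max n E"
        unfolding r_reachable_def by blast
      moreover have "finite S1" using S(1) finite_subset by blast
      ultimately show ?thesis unfolding mS_def by (meson Max_ge finite_imageI image_eqI le_trans)
    next
      assume "r_reachable E (r_max n E) S2"
      then obtain i where "i \<in> S2" "card (in_nbrs E i - S2) \<ge> r_max n E"
        unfolding r_reachable_def by blast
      moreover have "finite S2" using S(2) finite_subset by blast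
      ultimately show ?thesis unfolding mS_def by (meson Max_ge finite_imageI image_eqI le_trans)
    qed
    then show ?thesis using y val[OF S(1-4)] by auto
  qed
  have "\<not> r_robust n E (Suc (r_max n E))"
    using robust_rmax(2)[OF assms, of "Suc (r_max n E)"] by auto
  then obtain S1 S2 where S: "S1 \<subseteq> {1..n}" "S2 \<subseteq> {1..n}" "S1 \<noteq> {}" "S2 \<noteq> {}"
      "S1 \<inter> S2 = {}" and nr: "\<not> r_reachable E (Suc (r_max n E)) S1"
      "\<not> r_reachable E (Suc (r_max n E)) S2"
    unfolding r_robust_def by blast
  have fS: "finite S1" "finite S2" using S(1,2) finite_subset by blast+
  have m1: "mS E S1 \<le> r_max n E" unfolding mS_def using nr(1) S(3) fS(1)
    by (subst Max_le_iff) (auto simp: r_reachable_def not_le less_Suc_eq_le)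
  have m2: "mS E S2 \<le> r_max n E" unfolding mS_def using nr(2) S(4) fS(2)
    by (subst Max_le_iff) (auto simp: r_reachable_def not_le less_Suc_eq_le)
  have cards: "card S1 + card S2 \<le> n" "card S1 \<ge> 1" "card S2 \<ge> 1"
  proof -
    have "card S1 + card S2 = card (S1 \<union> S2)" using fS S(5) by (simp add: card_Un_disjoint)
    also have "\<dots> \<le> card {1..n}" using S by (intro card_mono) auto
    finally show "card S1 + card S2 \<le> n" by simp
    show "card S1 \<ge> 1" "card S2 \<ge> 1" using fS S(3,4) by (auto simp: Suc_le_eq card_gt_0_iff)
  qed
  have inF: "(ind S1, ind S2) \<in> ?F"
  proof -
    have a: "\<forall>k. k \<notin> {1..n} \<longrightarrow> ind S1 k = 0 \<and> ind S2 k = 0" using S(1,2) by (auto simp: ind_def)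
    have b: "\<forall>k\<in>{1..n}. ind S1 k \<in> {0, 1} \<and> ind S2 k \<in> {0, 1} \<and> ind S1 k + ind S2 k \<le> 1"
      using S(5) by (auto simp: ind_def)
    have c: "1 \<le> (\<Sum>k\<in>{1..n}. ind S1 k) \<and> (\<Sum>k\<in>{1..n}. ind S1 k) \<le> int n - 1
       \<and> 1 \<le> (\<Sum>k\<in>{1..n}. ind S2 k) \<and> (\<Sum>k\<in>{1..n}. ind S2 k) \<le> int n - 1"
      unfolding sumind[OF S(1)] sumind[OF S(2)] using cards by linarith
    show ?thesis using a b c by simp
  qed
  have upper: "?f (ind S1, ind S2) \<le> int (r_max n E)" using val[OF S(1-4)] m1 m2 by simp
  have "?f (ind S1, ind S2) = int (r_max n E)"
  proof -
    have "int (r_max n E) \<le> ?f (ind S1, ind S2)" by (rule lower) (use inF in blast)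
    then show ?thesis using upper by linarith
  qed
  then have mem: "int (r_max n E) \<in> ?f ` ?F" by (intro rev_image_eqI[OF inF]) simp
  show ?thesis
    using Min_eqI[OF finite_imageI[OF finF] lower mem] by (rule sym)
qed

end
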